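(* Let $L_s, L_t\ge 0$ be integers and let $\beta=M/N$ with $M,N$ positive integers, $\gcd(M,N)=1$. Consider the multiset of positions $\{Nn+Mk: 0\le n\le L_s,\ 0\le k\le L_t\}$ (these are the positions $\tfrac{2d}{\lambda_b}(n+\beta k)$ under the normalization $\tfrac{2d}{\lambda_b}=N$), and let $\zeta_0<\zeta_1<\cdots<\zeta_{R_r-1}$ be its distinct values. Let $\mathbf{P}\in\{0,1\}^{(L_s+1)(L_t+1)\times R_r}$ be the matrix whose row with index $k(L_s+1)+n$ (rows indexed from $0$) has a single $1$, located in the column $c$ with $\zeta_c = Nn+Mk$, and zeros elsewhere. Then $$\mathrm{rank}(\mathbf{P})=R_r=\begin{cases} N(L_s+1)+M(L_t+1)-MN, & M<L_s+1 \text{ and } N<L_t+1,\\ (L_s+1)(L_t+1), & M\ge L_s+1 \text{ or } N\ge L_t+1.\end{cases}$$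
   Context: The matrix $\mathbf{P}$ arises in an airborne co-pulsing frequency diverse array radar: the Kronecker product of the coarray time steering vector $[e^{\mathrm{j}2\pi\beta\bar f k}]_{k=0}^{L_t}$ and receive steering vector $[e^{\mathrm{j}2\pi\bar f n}]_{n=0}^{L_s}$ equals $\mathbf{P}\mathbf{v}_{Rb}(\bar f)$, where $\mathbf{v}_{Rb}$ collects the exponentials at the distinct positions. Here $\beta = 2\nu_p T/d$ (platform velocity $\nu_p$, pulse repetition interval $T$, element spacing $d$), and the theorem is stated under the assumption $2d/\lambda_b=N$ with $\lambda_b$ the reference wavelength. *)

theory Defs
  imports "Jordan_Normal_Form.DL_Rank"
begin

definition positions :: "nat \<Rightarrow> nat \<Rightarrow> nat \<Rightarrow> nat \<Rightarrow> nat set" where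
  "positions M N Ls Lt = {N * n + M * k | n k. n \<le> Ls \<and> k \<le> Lt}"

definition zeta :: "nat \<Rightarrow> nat \<Rightarrow> nat \<Rightarrow> nat \<Rightarrow> nat \<Rightarrow> nat" where
  "zeta M N Ls Lt c = sorted_list_of_set (positions M N Ls Lt) ! c"

definition Rr :: "nat \<Rightarrow> nat \<Rightarrow> nat \<Rightarrow> nat \<Rightarrow> nat" where
  "Rr M N Ls Lt = card (positions M N Ls Lt)"

definition Pmat :: "nat \<Rightarrow> nat \<Rightarrow> nat \<Rightarrow> nat \<Rightarrow> real mat" where
  "Pmat M N Ls Lt = mat ((Ls + 1) * (Lt + 1)) (Rr M N Ls Lt)
     (\<lambda>(i, c). if zeta M N Ls Lt c = N * (i mod (Ls + 1)) + M * (i div (Ls + 1)) then 1 else 0)"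

end

theory Submission imports Defs begin

lemma fin_pos: "finite (positions M N Ls Lt)"
proof -
  have "positions M N Ls Lt = (\<lambda>(n,k). N*n+M*k) ` ({..Ls} \<times> {..Lt})"
    unfolding positions_def by auto
  thus ?thesis by simp
qed

lemma zeta_in: "c < Rr M N Ls Lt \<Longrightarrow> zeta M N Ls Lt c \<in> positions M N Ls Lt"
  unfolding zeta_def Rr_def using fin_pos
  by (metis nth_mem set_sorted_list_of_set length_sorted_list_of_set)

lemma zeta_inj: "c < Rr M N Ls Lt \<Longrightarrow> c' < Rr M N Ls Lt \<Longrightarrow> zeta M N Ls Lt c = zeta M N Ls Lt c' \<Longrightarrow> c = c'"
  unfolding zeta_def Rr_def using fin_pos
  by (metis distinct_sorted_list_of_set length_sorted_list_of_set nth_eq_iff_index_eq)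

lemma dm: "n < (m::nat) \<Longrightarrow> (k*m+n) mod m = n \<and> (k*m+n) div m = k"
  by simp

lemma row_exists:
  assumes "c < Rr M N Ls Lt"
  obtains i where "i < (Ls+1)*(Lt+1)" "zeta M N Ls Lt c = N * (i mod (Ls + 1)) + M * (i div (Ls + 1))"
proof -
  obtain n k where nk: "n \<le> Ls" "k \<le> Lt" "zeta M N Ls Lt c = N*n+M*k"
    using zeta_in[OF assms] unfolding positions_def by auto
  define i where "i = k*(Ls+1)+n"
  have "i mod (Ls+1) = n" "i div (Ls+1) = k" unfolding i_def using nk(1) dm[of n "Ls+1" k] by auto
  moreover have "i < (Ls+1)*(Lt+1)"
  proof -
    have "i \<le> Lt*(Ls+1) + Ls" unfolding i_def using nk
      by (meson add_le_mono le_refl mult_le_mono)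
    also have "\<dots> < (Ls+1)*(Lt+1)" by (simp add: algebra_simps)
    finally show ?thesis .
  qed
  ultimately show ?thesis using that nk by auto
qed

lemma rank_P: "vec_space.rank ((Ls + 1) * (Lt + 1)) (Pmat M N Ls Lt) = Rr M N Ls Lt"
proof -
  let ?n = "(Ls + 1) * (Lt + 1)" and ?r = "Rr M N Ls Lt" and ?A = "Pmat M N Ls Lt"
  have car: "?A \<in> carrier_mat ?n ?r" unfolding Pmat_def by simp
  have ent: "?A $$ (i,c) = (if zeta M N Ls Lt c = N * (i mod (Ls + 1)) + M * (i div (Ls + 1)) then 1 else 0)"
    if "i < ?n" "c < ?r" for i c using that unfolding Pmat_def by simp
  have key: "\<exists>i < ?n. ?A $$ (i,c) = 1 \<and> (\<forall>c'<?r. c' \<noteq> c \<longrightarrow> ?A $$ (i,c') = 0)"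
    if cr: "c < ?r" for c
  proof -
    obtain i where i: "i < ?n" "zeta M N Ls Lt c = N * (i mod (Ls + 1)) + M * (i div (Ls + 1))"
      using row_exists[OF cr] by blast
    show ?thesis using i cr ent zeta_inj by (intro exI[of _ i]) auto
  qed
  have dist: "distinct (cols ?A)"
  proof -
    have "col ?A c \<noteq> col ?A c'" if cc: "c < ?r" "c' < ?r" "c \<noteq> c'" for c c'
    proof
      assume eq: "col ?A c = col ?A c'"
      obtain i where i: "i < ?n" "?A $$ (i,c) = 1" "?A $$ (i,c') = 0" using key[OF cc(1)] cc by blast
      have "col ?A c $ i = col ?A c' $ i" using eq by simp
      thus False using i car cc by auto
    qed
    thus ?thesis using car unfolding distinct_conv_nth by (auto simp: cols_nth)
  qed
  have indpt: "module.lin_indpt class_ring (module_vec TYPE(real) ?n) (set (cols ?A))"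
  proof (rule ccontr)
    assume "\<not> ?thesis"
    then obtain v where v: "v \<in> carrier_vec ?r" "v \<noteq> 0\<^sub>v ?r" "?A *\<^sub>v v = 0\<^sub>v ?n"
      using vec_space.lin_depE[OF car _ dist] by blast
    have "v $ c = 0" if cr: "c < ?r" for c
    proof -
      obtain i where i: "i < ?n" "?A $$ (i,c) = 1" "\<forall>c'<?r. c' \<noteq> c \<longrightarrow> ?A $$ (i,c') = 0"
        using key[OF cr] by blast
      have "(?A *\<^sub>v v) $ i = (\<Sum>j\<in>{0..<?r}. ?A $$ (i,j) * v $ j)"
        using i car v(1) by (simp add: scalar_prod_def)
      also have "\<dots> = (\<Sum>j\<in>{0..<?r}. if j = c then v $ c else 0)"
        using i by (intro sum.cong) auto
      also have "\<dots> = v $ c" using cr by simp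
      finally show ?thesis using v i by simp
    qed
    thus False using v by (auto simp: vec_eq_iff)
  qed
  show ?thesis using vec_space.lin_indpt_full_rank[OF car dist indpt] .
qed

lemma collide:
  assumes M: "M > 0" and cop: "coprime M (N::nat)" and eq: "N*n+M*k = N*n'+M*k'" and le: "n' \<le> n"
  shows "\<exists>j. n = n'+j*M \<and> k' = k+j*N"
proof -
  have "N*n' \<le> N*n" using le by simp
  hence "M*k \<le> M*k'" using eq by linarith
  hence kk: "k \<le> k'" using M by simp
  have e2: "N*(n-n') = M*(k'-k)" using eq le kk by (simp add: diff_mult_distrib2)
  hence "M dvd N*(n-n')" by simp
  hence "M dvd (n-n')" using cop by (simp add: coprime_dvd_mult_right_iff)
  then obtain j where j: "n-n' = M*j" by (auto elim: dvdE)
  have "M*(N*j) = M*(k'-k)" using e2 j by (simp add: ac_simps)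
  hence "k'-k = N*j" using M by simp
  hence "k' = k + N*j" using kk by linarith
  moreover have "n = n' + M*j" using j le by linarith
  ultimately show ?thesis by (intro exI[of _ j]) (simp add: ac_simps)
qed

lemma pos_img: "positions M N Ls Lt = (\<lambda>(n,k). N*n+M*k) ` ({..Ls} \<times> {..Lt})"
  unfolding positions_def by auto

lemma card_else:
  assumes M: "M > 0" and cop: "coprime M (N::nat)" and c: "\<not> (M < Ls + 1 \<and> N < Lt + 1)"
  shows "Rr M N Ls Lt = (Ls+1)*(Lt+1)"
proof -
  have "inj_on (\<lambda>(n,k). N*n+M*k) ({..Ls} \<times> {..Lt})"
  proof (rule inj_onI, clarify)
    fix n k n' k' assume h: "N*n+M*k = N*n'+M*k'" "n \<le> Ls" "k \<le> Lt" "n' \<le> Ls" "k' \<le> Lt"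
    show "n = n' \<and> k = k'"
    proof (cases "n' \<le> n")
      case True
      then obtain j where j: "n = n'+j*M" "k' = k+j*N" using collide[OF M cop h(1)] by blast
      have "j = 0"
      proof (rule ccontr)
        assume "j \<noteq> 0"
        hence "M \<le> j*M" "N \<le> j*N" by auto
        thus False using j h c by linarith
      qed
      thus ?thesis using j by simp
    next
      case False
      then obtain j where j: "n' = n+j*M" "k = k'+j*N" using collide[OF M cop h(1)[symmetric]] by auto
      have "j = 0"
      proof (rule ccontr)
        assume "j \<noteq> 0"
        hence "M \<le> j*M" "N \<le> j*N" by auto
        thus False using j h c by linarith
      qed
      thus ?thesis using j by simp
    qed
  qed
  thus ?thesis unfolding Rr_def pos_img by (simp add: card_image card_cartesian_product)
qed

lemma card_main:
  assumes M: "M > 0" and NN: "N > 0" and cop: "coprime M (N::nat)" and c: "M < Ls + 1" "N < Lt + 1"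
  shows "Rr M N Ls Lt = N * (Ls + 1) + M * (Lt + 1) - M * N"
proof -
  define f where "f = (\<lambda>(n,k). N*n+M*(k::nat))"
  define S1 where "S1 = {..<M} \<times> {..Lt}"
  define S2 where "S2 = {M..Ls} \<times> {Lt+1-N..Lt}"
  have inj: "inj_on f (S1 \<union> S2)"
  proof (rule inj_onI, clarify)
    fix n k n' k' assume h0: "f (n,k) = f (n',k')" "(n,k) \<in> S1 \<union> S2" "(n',k') \<in> S1 \<union> S2"
    have h: "N*n+M*k = N*n'+M*k'" using h0(1) unfolding f_def by simp
    have m1: "n < M \<or> (M \<le> n \<and> Lt+1-N \<le> k)" "k \<le> Lt" using h0(2) unfolding S1_def S2_def by auto
    have m2: "n' < M \<or> (M \<le> n' \<and> Lt+1-N \<le> k')" "k' \<le> Lt" using h0(3) unfolding S1_def S2_def by auto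
    show "n = n' \<and> k = k'"
    proof (cases "n' \<le> n")
      case True
      then obtain j where j: "n = n'+j*M" "k' = k+j*N" using collide[OF M cop h] by blast
      have "j = 0"
      proof (rule ccontr)
        assume "j \<noteq> 0"
        hence "M \<le> j*M" "N \<le> j*N" by auto
        thus False using j m1 m2 c by linarith
      qed
      thus ?thesis using j by simp
    next
      case False
      then obtain j where j: "n' = n+j*M" "k = k'+j*N" using collide[OF M cop h[symmetric]] by auto
      have "j = 0"
      proof (rule ccontr)
        assume "j \<noteq> 0"
        hence "M \<le> j*M" "N \<le> j*N" by auto
        thus False using j m1 m2 c by linarith
      qed
      thus ?thesis using j by simp
    qed
  qed
  have sub: "f ` (S1 \<union> S2) \<subseteq> positions M N Ls Lt"
    unfolding pos_img f_def[symmetric] S1_def S2_def using c by (intro image_mono) auto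
  have sup: "\<forall>k. n \<le> Ls \<longrightarrow> k \<le> Lt \<longrightarrow> f (n,k) \<in> f ` (S1 \<union> S2)" for n
  proof (induction n rule: less_induct)
    case (less n)
    show ?case
    proof (intro allI impI)
      fix k assume nk: "n \<le> Ls" "k \<le> Lt"
      show "f (n,k) \<in> f ` (S1 \<union> S2)"
      proof (cases "n < M \<or> Lt + 1 \<le> k + N")
        case True
        hence "(n,k) \<in> S1 \<union> S2" using nk unfolding S1_def S2_def by auto
        thus ?thesis by blast
      next
        case False
        hence nd: "n = M + (n-M)" by simp
        have "f (M + (n-M),k) = f (n-M, k+N)" unfolding f_def by (simp add: algebra_simps)
        hence "f (n,k) = f (n-M, k+N)" using nd by simp
        moreover have "f (n-M, k+N) \<in> f ` (S1 \<union> S2)"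
          using less.IH[of "n-M"] False nk M by auto
        ultimately show ?thesis by simp
      qed
    qed
  qed
  have "positions M N Ls Lt = f ` (S1 \<union> S2)"
    using sub sup unfolding pos_img f_def[symmetric] by auto
  hence "Rr M N Ls Lt = card (S1 \<union> S2)" unfolding Rr_def using inj by (simp add: card_image)
  also have "\<dots> = card S1 + card S2"
    by (rule card_Un_disjoint) (auto simp: S1_def S2_def)
  also have "\<dots> = M*(Lt+1) + (Ls+1-M)*N"
    using c unfolding S1_def S2_def by (simp add: card_cartesian_product)
  also have "\<dots> = N * (Ls + 1) + M * (Lt + 1) - M * N"
  proof -
    have "M*N \<le> (Ls+1)*N" using c by (intro mult_le_mono1) simp
    thus ?thesis by (simp add: diff_mult_distrib algebra_simps)
  qed
  finally show ?thesis .
qed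

theorem theorem2:
  fixes M N Ls Lt :: nat
  assumes "M > 0" and "N > 0" and "coprime M N"
  shows "vec_space.rank ((Ls + 1) * (Lt + 1)) (Pmat M N Ls Lt) = Rr M N Ls Lt
       \<and> Rr M N Ls Lt = (if M < Ls + 1 \<and> N < Lt + 1
                          then N * (Ls + 1) + M * (Lt + 1) - M * N
                          else (Ls + 1) * (Lt + 1))"
  using rank_P card_main[OF assms(1,2,3)] card_else[OF assms(1,3)] by auto

end
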